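(* For any family of policies $\Pi$, $\mathrm{CH}(\Pi)\subseteq\mathrm{CDUS}(\Pi)$.
   Context: $\Pi=\{\pi_1,\pi_2,\dots\}$ is a family of policies of a multi-objective sequential decision problem with $d$ objectives; each $\pi\in\Pi$ has a random return vector $\mathbf{Z}^\pi\in\mathbb{R}^d$ with finite expectation $\mathbf{V}^\pi=\mathbb{E}[\mathbf{Z}^\pi]$. $\Delta^{|\Pi|}$ denotes probability weight vectors $\lambda$ over $\Pi$, and $\sum_i\lambda_i\mathbf{Z}^{\pi_i}$ denotes the mixture distribution (CDF $\sum_i\lambda_iF_{\mathbf{Z}^{\pi_i}}$). For $\mathbf{x},\mathbf{y}\in\mathbb{R}^d$: $\mathbf{y}\preceq_p\mathbf{x}$ iff $y_i\le x_i$ for all $i$; $\mathbf{x}\succ_p\mathbf{y}$ iff $x_i\ge y_i$ for all $i$ and $x_i>y_i$ for some $i$. CDF: $F_{\mathbf{X}}(\mathbf{x})=P(\mathbf{X}\preceq_p\mathbf{x})$. $\mathbf{X}\succeq_{\mathrm{FSD}}\mathbf{Y}$ iff $F_{\mathbf{X}}\le F_{\mathbf{Y}}$ pointwise; $\succ_{\mathrm{FSD}}$ additionally requires strict inequality at some point. $\mathbf{X}\succ_d\mathbf{Y}$ iff $\mathbf{X}\succeq_{\mathrm{FSD}}\mathbf{Y}$ and $X_j\succ_{\mathrm{FSD}}Y_j$ for some marginal $j$. Convex hull: $\mathrm{CH}(\Pi)=\{\pi\in\Pi:\nexists\lambda\in\Delta^{|\Pi|},\ \sum_i\lambda_i\mathbf{V}^{\pi_i}\succ_p\mathbf{V}^\pi\}$.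 Convex distributional undominated set: $\mathrm{CDUS}(\Pi)=\{\pi\in\Pi:\nexists\lambda\in\Delta^{|\Pi|},\ \sum_i\lambda_i\mathbf{Z}^{\pi_i}\succ_d\mathbf{Z}^\pi\}$. *)

theory Defs
  imports "HOL-Probability.Probability"
begin

text \<open>Return vectors live in real^'d (d = CARD('d) objectives). The return
distribution of a policy is a probability measure on the Borel sets of real^'d.\<close>

definition pareto_le :: "real^'d \<Rightarrow> real^'d \<Rightarrow> bool" where
  "pareto_le y x \<longleftrightarrow> (\<forall>i. y$i \<le> x$i)"

definition pareto_dom :: "real^'d \<Rightarrow> real^'d \<Rightarrow> bool" where
  "pareto_dom x y \<longleftrightarrow> (\<forall>i. x$i \<ge> y$i) \<and> (\<exists>i. x$i > y$i)"

definition cdf_vec :: "(real^'d) measure \<Rightarrow> real^'d \<Rightarrow> real" where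
  "cdf_vec M x = measure M {y. pareto_le y x}"

definition marg_cdf :: "(real^'d) measure \<Rightarrow> 'd \<Rightarrow> real \<Rightarrow> real" where
  "marg_cdf M j t = measure M {y. y$j \<le> t}"

definition fsd_ge :: "(real^'d) measure \<Rightarrow> (real^'d) measure \<Rightarrow> bool" where
  "fsd_ge X Y \<longleftrightarrow> (\<forall>x. cdf_vec X x \<le> cdf_vec Y x)"

definition marg_fsd_gt :: "(real^'d) measure \<Rightarrow> (real^'d) measure \<Rightarrow> 'd \<Rightarrow> bool" where
  "marg_fsd_gt X Y j \<longleftrightarrow> (\<forall>t. marg_cdf X j t \<le> marg_cdf Y j t) \<and> (\<exists>t. marg_cdf X j t < marg_cdf Y j t)"

definition dist_dom :: "(real^'d) measure \<Rightarrow> (real^'d) measure \<Rightarrow> bool" where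
  "dist_dom X Y \<longleftrightarrow> fsd_ge X Y \<and> (\<exists>j. marg_fsd_gt X Y j)"

definition expval :: "(real^'d) measure \<Rightarrow> real^'d" where
  "expval M = integral\<^sup>L M (\<lambda>x. x)"

definition weight_simplex :: "'p set \<Rightarrow> ('p \<Rightarrow> real) set" where
  "weight_simplex P = {l. (\<forall>p\<in>P. l p \<ge> 0) \<and> (\<Sum>p\<in>P. l p) = 1}"

text \<open>Mixture distribution \<Sum> l_i Z^{pi_i} (its CDF is \<Sum> l_i F_i).\<close>
definition mixture :: "'p set \<Rightarrow> ('p \<Rightarrow> real) \<Rightarrow> ('p \<Rightarrow> (real^'d) measure) \<Rightarrow> (real^'d) measure" where
  "mixture P l Z = measure_of UNIV (sets borel)
     (\<lambda>A. \<Sum>p\<in>P. ennreal (l p) * emeasure (Z p) A)"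

definition CH :: "'p set \<Rightarrow> ('p \<Rightarrow> (real^'d) measure) \<Rightarrow> 'p set" where
  "CH P Z = {p\<in>P. \<not> (\<exists>l\<in>weight_simplex P.
       pareto_dom (\<Sum>q\<in>P. l q *\<^sub>R expval (Z q)) (expval (Z p)))}"

definition CDUS :: "'p set \<Rightarrow> ('p \<Rightarrow> (real^'d) measure) \<Rightarrow> 'p set" where
  "CDUS P Z = {p\<in>P. \<not> (\<exists>l\<in>weight_simplex P. dist_dom (mixture P l Z) (Z p))}"

end

theory Submission
  imports Defs
begin


lemma mixture_bind:
  fixes P :: "'p set" and Z :: "'p \<Rightarrow> (real^'d) measure"
  assumes fin: "finite P" and ne: "P \<noteq> {}"
    and l: "l \<in> weight_simplex P"
    and ps: "\<And>p. p \<in> P \<Longrightarrow> prob_space (Z p)"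
    and sb: "\<And>p. p \<in> P \<Longrightarrow> sets (Z p) = sets borel"
  shows "mixture P l Z = bind (density (count_space P) (\<lambda>q. ennreal (l q))) Z"
proof -
  define M0 where "M0 = density (count_space P) (\<lambda>q. ennreal (l q))"
  have spM0: "space M0 = P" by (simp add: M0_def)
  have Zm: "Z \<in> measurable M0 (subprob_algebra borel)"
    unfolding M0_def measurable_cong_sets[OF sets_density refl]
    by (auto simp: space_subprob_algebra sb prob_space_imp_subprob_space ps)
  define B where "B = bind M0 Z"
  have sB: "sets B = sets borel" unfolding B_def
    by (rule sets_bind) (auto simp: spM0 sb ne)
  have spB: "space B = UNIV" using sets_eq_imp_space_eq[OF sB] by simp
  have eB: "emeasure B A = (\<Sum>q\<in>P. ennreal (l q) * emeasure (Z q) A)" if A: "A \<in> sets borel" for A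
  proof -
    have "emeasure B A = (\<integral>\<^sup>+q. emeasure (Z q) A \<partial>M0)"
      unfolding B_def by (rule emeasure_bind[where N=borel]) (auto simp: spM0 ne Zm A)
    also have "\<dots> = (\<integral>\<^sup>+q. ennreal (l q) * emeasure (Z q) A \<partial>count_space P)"
      unfolding M0_def by (subst nn_integral_density) auto
    also have "\<dots> = (\<Sum>q\<in>P. ennreal (l q) * emeasure (Z q) A)"
      using fin by (simp add: nn_integral_count_space_finite)
    finally show ?thesis .
  qed
  have "B = measure_of (space B) (sets B) (emeasure B)" by (simp add: measure_of_of_measure)
  also have "\<dots> = measure_of UNIV (sets borel) (\<lambda>A. \<Sum>q\<in>P. ennreal (l q) * emeasure (Z q) A)"
    unfolding spB sB
    by (rule measure_of_eq) (auto simp: eB sets.sigma_sets_eq[of borel, simplified])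
  finally show ?thesis unfolding mixture_def B_def M0_def by simp
qed

lemma mixture_facts:
  fixes P :: "'p set" and Z :: "'p \<Rightarrow> (real^'d) measure"
  assumes fin: "finite P" and ne: "P \<noteq> {}"
    and l: "l \<in> weight_simplex P"
    and ps: "\<And>p. p \<in> P \<Longrightarrow> prob_space (Z p)"
    and sb: "\<And>p. p \<in> P \<Longrightarrow> sets (Z p) = sets borel"
  shows "sets (mixture P l Z) = sets borel"
    and "\<And>g. g \<in> borel_measurable borel \<Longrightarrow>
           (\<integral>\<^sup>+x. g x \<partial>mixture P l Z) = (\<Sum>q\<in>P. ennreal (l q) * (\<integral>\<^sup>+x. g x \<partial>Z q))"
    and "\<And>A. A \<in> sets borel \<Longrightarrow> emeasure (mixture P l Z) A = (\<Sum>q\<in>P. ennreal (l q) * emeasure (Z q) A)"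
    and "prob_space (mixture P l Z)"
proof -
  define M0 where "M0 = density (count_space P) (\<lambda>q. ennreal (l q))"
  have mb: "mixture P l Z = bind M0 Z" unfolding M0_def by (rule mixture_bind[OF assms])
  have spM0: "space M0 = P" by (simp add: M0_def)
  have Zm: "Z \<in> measurable M0 (subprob_algebra borel)"
    unfolding M0_def measurable_cong_sets[OF sets_density refl]
    by (auto simp: space_subprob_algebra sb prob_space_imp_subprob_space ps)
  show sM: "sets (mixture P l Z) = sets borel" unfolding mb
    by (rule sets_bind) (auto simp: spM0 sb ne)
  show nn: "(\<integral>\<^sup>+x. g x \<partial>mixture P l Z) = (\<Sum>q\<in>P. ennreal (l q) * (\<integral>\<^sup>+x. g x \<partial>Z q))"
    if g: "g \<in> borel_measurable borel" for g
  proof -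
    have "(\<integral>\<^sup>+x. g x \<partial>mixture P l Z) = (\<integral>\<^sup>+q. (\<integral>\<^sup>+x. g x \<partial>Z q) \<partial>M0)"
      unfolding mb by (rule nn_integral_bind[OF g Zm])
    also have "\<dots> = (\<integral>\<^sup>+q. ennreal (l q) * (\<integral>\<^sup>+x. g x \<partial>Z q) \<partial>count_space P)"
      unfolding M0_def by (subst nn_integral_density) auto
    also have "\<dots> = (\<Sum>q\<in>P. ennreal (l q) * (\<integral>\<^sup>+x. g x \<partial>Z q))"
      using fin by (simp add: nn_integral_count_space_finite)
    finally show ?thesis .
  qed
  show em: "emeasure (mixture P l Z) A = (\<Sum>q\<in>P. ennreal (l q) * emeasure (Z q) A)"
    if A: "A \<in> sets borel" for A
  proof -
    have "emeasure (mixture P l Z) A = (\<integral>\<^sup>+q. emeasure (Z q) A \<partial>M0)"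
      unfolding mb by (rule emeasure_bind[where N=borel]) (auto simp: spM0 ne Zm A)
    also have "\<dots> = (\<integral>\<^sup>+q. ennreal (l q) * emeasure (Z q) A \<partial>count_space P)"
      unfolding M0_def by (subst nn_integral_density) auto
    also have "\<dots> = (\<Sum>q\<in>P. ennreal (l q) * emeasure (Z q) A)"
      using fin by (simp add: nn_integral_count_space_finite)
    finally show ?thesis .
  qed
  have sp: "space (mixture P l Z) = UNIV" using sets_eq_imp_space_eq[OF sM] by simp
  have "emeasure (mixture P l Z) UNIV = (\<Sum>q\<in>P. ennreal (l q) * emeasure (Z q) UNIV)"
    by (rule em) simp
  also have "\<dots> = (\<Sum>q\<in>P. ennreal (l q))"
  proof (rule sum.cong[OF refl])
    fix q assume q: "q \<in> P"
    interpret prob_space "Z q" using ps[OF q] .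
    have "space (Z q) = UNIV" using sets_eq_imp_space_eq[OF sb[OF q]] by simp
    then show "ennreal (l q) * emeasure (Z q) UNIV = ennreal (l q)" using emeasure_space_1 by simp
  qed
  also have "\<dots> = 1" using l by (simp add: weight_simplex_def)
  finally show "prob_space (mixture P l Z)" by (intro prob_spaceI) (simp add: sp)
qed

lemma mixture_integral:
  fixes P :: "'p set" and Z :: "'p \<Rightarrow> (real^'d) measure" and f :: "real^'d \<Rightarrow> real"
  assumes fin: "finite P" and ne: "P \<noteq> {}"
    and l: "l \<in> weight_simplex P"
    and ps: "\<And>p. p \<in> P \<Longrightarrow> prob_space (Z p)"
    and sb: "\<And>p. p \<in> P \<Longrightarrow> sets (Z p) = sets borel"
    and fi: "\<And>p. p \<in> P \<Longrightarrow> integrable (Z p) f"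
  shows "integrable (mixture P l Z) f"
    and "integral\<^sup>L (mixture P l Z) f = (\<Sum>q\<in>P. l q * integral\<^sup>L (Z q) f)"
proof -
  note mf = mixture_facts[of P l Z, OF assms(1-5)]
  obtain p where p: "p \<in> P" using ne by auto
  have fm: "f \<in> borel_measurable borel"
    using fi[OF p] borel_measurable_integrable measurable_cong_sets[OF sb[OF p] refl] by blast
  have l0: "\<And>q. q \<in> P \<Longrightarrow> 0 \<le> l q" using l by (simp add: weight_simplex_def)
  have fin_nn: "(\<integral>\<^sup>+x. ennreal (h x) \<partial>Z q) < \<infinity>"
    if q: "q \<in> P" and h: "h = f \<or> h = (\<lambda>x. - f x)" for q h
  proof -
    have "(\<integral>\<^sup>+x. ennreal (h x) \<partial>Z q) \<le> (\<integral>\<^sup>+x. ennreal (norm (f x)) \<partial>Z q)"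
      using h by (intro nn_integral_mono) (auto intro: ennreal_leI)
    also have "\<dots> < \<infinity>" using fi[OF q] unfolding integrable_iff_bounded by simp
    finally show ?thesis .
  qed
  show int: "integrable (mixture P l Z) f"
  proof -
    have "(\<integral>\<^sup>+x. ennreal (norm (f x)) \<partial>mixture P l Z)
        = (\<Sum>q\<in>P. ennreal (l q) * (\<integral>\<^sup>+x. ennreal (norm (f x)) \<partial>Z q))"
      by (rule mf(2)) (use fm in measurable)
    also have "\<dots> < \<infinity>"
      using fi unfolding integrable_iff_bounded
      using fin by (auto simp: ennreal_mult_less_top)
    moreover have "f \<in> borel_measurable (mixture P l Z)"
      by (subst measurable_cong_sets[OF mf(1) refl]) (use fm in auto)
    ultimately show ?thesis unfolding integrable_iff_bounded by simp
  qed
  have key: "enn2real (\<integral>\<^sup>+x. ennreal (h x) \<partial>mixture P l Z)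
      = (\<Sum>q\<in>P. l q * enn2real (\<integral>\<^sup>+x. ennreal (h x) \<partial>Z q))"
    if h: "h = f \<or> h = (\<lambda>x. - f x)" for h
  proof -
    have hm: "h \<in> borel_measurable borel" using h fm by auto
    have "enn2real (\<integral>\<^sup>+x. ennreal (h x) \<partial>mixture P l Z)
        = enn2real (\<Sum>q\<in>P. ennreal (l q) * (\<integral>\<^sup>+x. ennreal (h x) \<partial>Z q))"
      by (subst mf(2)) (use hm in auto)
    also have "\<dots> = (\<Sum>q\<in>P. enn2real (ennreal (l q) * (\<integral>\<^sup>+x. ennreal (h x) \<partial>Z q)))"
      using fin_nn[OF _ h] by (subst enn2real_sum) (auto simp: ennreal_mult_less_top)
    also have "\<dots> = (\<Sum>q\<in>P. l q * enn2real (\<integral>\<^sup>+x. ennreal (h x) \<partial>Z q))"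
      using l0 by (intro sum.cong) (auto simp: enn2real_mult)
    finally show ?thesis .
  qed
  show "integral\<^sup>L (mixture P l Z) f = (\<Sum>q\<in>P. l q * integral\<^sup>L (Z q) f)"
    unfolding real_lebesgue_integral_def[OF int]
    using key[of f] key[of "\<lambda>x. - f x"]
    by (simp add: real_lebesgue_integral_def[OF fi] right_diff_distrib sum_subtractf)
qed



lemma fsd_expect:
  fixes M N :: "real measure"
  assumes rM: "real_distribution M" and rN: "real_distribution N"
    and iM: "integrable M (\<lambda>x. x)" and iN: "integrable N (\<lambda>x. x)"
    and le: "\<And>t. cdf M t \<le> cdf N t"
  shows "(\<integral>x. x \<partial>N) \<le> (\<integral>x. x \<partial>M)"
    and "(\<exists>t. cdf M t < cdf N t) \<Longrightarrow> (\<integral>x. x \<partial>N) < (\<integral>x. x \<partial>M)"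
proof -
  interpret A: cdf_distribution M by (rule cdf_distribution.intro[OF rM])
  interpret B: cdf_distribution N by (rule cdf_distribution.intro[OF rN])
  let ?\<Omega> = "restrict_space lborel {0<..<1::real}"
  interpret \<Omega>: prob_space ?\<Omega>
    by (auto simp add: emeasure_restrict_space space_restrict_space intro!: prob_spaceI)
  have sO: "sets ?\<Omega> = sets (restrict_space borel {0<..<1::real})"
    by (rule sets_restrict_space_cong) simp
  have mA: "A.I \<in> borel_measurable ?\<Omega>"
    using A.measurable_CI measurable_cong_sets[OF sO refl] by blast
  have mB: "B.I \<in> borel_measurable ?\<Omega>"
    using B.measurable_CI measurable_cong_sets[OF sO refl] by blast
  have eA: "(\<integral>x. x \<partial>M) = (\<integral>\<omega>. A.I \<omega> \<partial>?\<Omega>)"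
    using integral_distr[OF mA, of "\<lambda>x. x"] A.distr_I_eq_M by simp
  have eB: "(\<integral>x. x \<partial>N) = (\<integral>\<omega>. B.I \<omega> \<partial>?\<Omega>)"
    using integral_distr[OF mB, of "\<lambda>x. x"] B.distr_I_eq_M by simp
  have jA: "integrable ?\<Omega> A.I"
  proof -
    have "integrable (distr ?\<Omega> borel A.I) (\<lambda>x. x)" unfolding A.distr_I_eq_M by (rule iM)
    then show ?thesis using integrable_distr_eq[OF mA measurable_ident_sets[OF refl]] by simp
  qed
  have jB: "integrable ?\<Omega> B.I"
  proof -
    have "integrable (distr ?\<Omega> borel B.I) (\<lambda>x. x)" unfolding B.distr_I_eq_M by (rule iN)
    then show ?thesis using integrable_distr_eq[OF mB measurable_ident_sets[OF refl]] by simp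
  qed
  have pw: "B.I \<omega> \<le> A.I \<omega>" if "\<omega> \<in> space ?\<Omega>" for \<omega>
  proof -
    have w: "0 < \<omega>" "\<omega> < 1" using that by (auto simp: space_restrict_space)
    have "\<omega> \<le> cdf M (A.I \<omega>)" using A.pseudoinverse[OF w, of "A.I \<omega>"] by blast
    then have "\<omega> \<le> cdf N (A.I \<omega>)" using le order_trans by blast
    then show ?thesis using B.pseudoinverse[OF w, of "A.I \<omega>"] by blast
  qed
  have AEle: "AE \<omega> in ?\<Omega>. B.I \<omega> \<le> A.I \<omega>" using pw by (intro AE_I2) auto
  show "(\<integral>x. x \<partial>N) \<le> (\<integral>x. x \<partial>M)"
    unfolding eA eB by (rule integral_mono_AE[OF jB jA AEle])
  assume "\<exists>t. cdf M t < cdf N t"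
  then obtain t where t: "cdf M t < cdf N t" by blast
  let ?S = "{cdf M t <..< cdf N t}"
  have S01: "?S \<subseteq> {0<..<1}"
    using A.cdf_nonneg[of t] B.cdf_bounded_prob[of t] by auto
  have "emeasure ?\<Omega> ?S = emeasure lborel ?S"
    using S01 by (subst emeasure_restrict_space) (auto simp: Int_absorb2)
  also have "\<dots> = ennreal (cdf N t - cdf M t)" using t by simp
  finally have Spos: "emeasure ?\<Omega> ?S \<noteq> 0" using t by simp
  have Ssets: "?S \<in> sets ?\<Omega>" using S01 by (auto simp: sets_restrict_space_iff)
  have neq: "B.I \<omega> \<noteq> A.I \<omega>" if "\<omega> \<in> ?S" for \<omega>
  proof -
    have w: "0 < \<omega>" "\<omega> < 1" using that S01 by auto
    have "B.I \<omega> \<le> t" using B.pseudoinverse[OF w, of t] that by auto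
    moreover have "\<not> A.I \<omega> \<le> t" using A.pseudoinverse[OF w, of t] that by auto
    ultimately show ?thesis by auto
  qed
  show "(\<integral>x. x \<partial>N) < (\<integral>x. x \<partial>M)"
    unfolding eA eB
    by (rule \<Omega>.integral_less_AE[OF jB jA Spos Ssets]) (use neq AEle in auto)
qed



lemma pareto_sets_borel: "{y::real^'d. pareto_le y x} \<in> sets borel"
proof -
  have "{y::real^'d. pareto_le y x} = (\<Inter>i. {y. y$i \<le> x$i})" by (auto simp: pareto_le_def)
  moreover have "closed {y::real^'d. y$i \<le> x$i}" for i
    by (intro closed_Collect_le continuous_intros)
  ultimately show ?thesis by auto
qed

lemma marg_sets_borel: "{y::real^'d. y$j \<le> t} \<in> sets borel"
  by (intro borel_closed closed_Collect_le continuous_intros)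

lemma marg_lim:
  fixes M :: "(real^'d) measure"
  assumes ps: "prob_space M" and sb: "sets M = sets borel"
  shows "(\<lambda>n. cdf_vec M (\<chi> i. if i = j then t else real n)) \<longlonglongrightarrow> marg_cdf M j t"
proof -
  interpret prob_space M by (rule ps)
  define A where "A n = {y::real^'d. pareto_le y (\<chi> i. if i = j then t else real n)}" for n
  have r: "range A \<subseteq> sets M" unfolding A_def sb using pareto_sets_borel by auto
  have inc: "incseq A" unfolding incseq_def A_def pareto_le_def
    by (auto intro: order_trans)
  have U: "(\<Union>n. A n) = {y. y$j \<le> t}"
  proof (intro equalityI subsetI)
    fix y assume "y \<in> (\<Union>n. A n)" then show "y \<in> {y. y$j \<le> t}"
      by (auto simp: A_def pareto_le_def dest: spec[of _ j])
  next
    fix y assume y: "y \<in> {y. y$j \<le> t}"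
    obtain n where n: "norm y \<le> real n" using real_arch_simple by blast
    have "y$i \<le> real n" for i using Finite_Cartesian_Product.norm_nth_le[where x=y and i=i] n abs_ge_self[of "y$i"] by (simp only: real_norm_def)
    then have "y \<in> A n" using y by (auto simp: A_def pareto_le_def)
    then show "y \<in> (\<Union>n. A n)" by blast
  qed
  show ?thesis
    using finite_Lim_measure_incseq[OF r inc] unfolding U
    by (simp add: cdf_vec_def marg_cdf_def A_def)
qed

lemma marg_le:
  fixes M N :: "(real^'d) measure"
  assumes "prob_space M" "sets M = sets borel" "prob_space N" "sets N = sets borel"
    and "fsd_ge M N"
  shows "marg_cdf M j t \<le> marg_cdf N j t"
  by (rule LIMSEQ_le[OF marg_lim[OF assms(1,2)] marg_lim[OF assms(3,4)]])
     (use assms(5) in \<open>auto simp: fsd_ge_def\<close>)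


lemma marg_dist:
  fixes X :: "(real^'d) measure"
  assumes ps: "prob_space X" and sb: "sets X = sets borel" and ii: "integrable X (\<lambda>x. x)"
  shows "real_distribution (distr X borel (\<lambda>x. x$i))"
    and "integrable (distr X borel (\<lambda>x. x$i)) (\<lambda>x. x)"
    and "(\<integral>x. x \<partial>distr X borel (\<lambda>x. x$i)) = expval X $ i"
    and "cdf (distr X borel (\<lambda>x. x$i)) t = marg_cdf X i t"
proof -
  interpret prob_space X by (rule ps)
  have sp: "space X = UNIV" using sets_eq_imp_space_eq[OF sb] by simp
  have m: "(\<lambda>x. x$i) \<in> measurable X borel"
    by (subst measurable_cong_sets[OF sb refl])
       (intro borel_measurable_continuous_onI continuous_intros)
  show "real_distribution (distr X borel (\<lambda>x. x$i))"
    by (rule real_distribution.intro[OF prob_space_distr[OF m]]) (simp add: real_distribution_axioms_def)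
  have ic: "integrable X (\<lambda>x. x$i)"
    by (rule integrable_bounded_linear[OF bounded_linear_vec_nth ii])
  show "integrable (distr X borel (\<lambda>x. x$i)) (\<lambda>x. x)"
    using integrable_distr_eq[OF m measurable_ident_sets[OF refl]] ic by simp
  show "(\<integral>x. x \<partial>distr X borel (\<lambda>x. x$i)) = expval X $ i"
    using integral_distr[OF m measurable_ident_sets[OF refl]]
      integral_bounded_linear[OF bounded_linear_vec_nth ii] by (simp add: expval_def)
  have "(\<lambda>x. x$i) -` {..t} \<inter> space X = {y. y$i \<le> t}" by (auto simp: sp)
  then show "cdf (distr X borel (\<lambda>x. x$i)) t = marg_cdf X i t"
    unfolding cdf_def marg_cdf_def using measure_distr[OF m, of "{..t}"] by simp
qed

theorem corollary5p1p1:
  fixes P :: "'p set" and Z :: "'p \<Rightarrow> (real^'d) measure"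
  assumes "finite P"
    and "\<And>p. p \<in> P \<Longrightarrow> prob_space (Z p)"
    and "\<And>p. p \<in> P \<Longrightarrow> sets (Z p) = sets borel"
    and "\<And>p. p \<in> P \<Longrightarrow> integrable (Z p) (\<lambda>x. x)"
  shows "CH P Z \<subseteq> CDUS P Z"
proof
  fix p assume pCH: "p \<in> CH P Z"
  then have p: "p \<in> P" by (simp add: CH_def)
  have ne: "P \<noteq> {}" using p by auto
  show "p \<in> CDUS P Z"
  proof (unfold CDUS_def, intro CollectI conjI p notI)
    assume "\<exists>l\<in>weight_simplex P. dist_dom (mixture P l Z) (Z p)"
    then obtain l where l: "l \<in> weight_simplex P" and dd: "dist_dom (mixture P l Z) (Z p)" by blast
    let ?X = "mixture P l Z"
    note mf = mixture_facts[of P l Z, OF assms(1) ne l assms(2,3)]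
    have Xps: "prob_space ?X" using mf(4) by auto
    have Xsb: "sets ?X = sets borel" using mf(1) by auto
    have iX: "integrable ?X (\<lambda>x. x$i) \<and> integral\<^sup>L ?X (\<lambda>x. x$i) = (\<Sum>q\<in>P. l q * integral\<^sup>L (Z q) (\<lambda>x. x$i))" for i
      using mixture_integral[of P l Z "\<lambda>x. x$i", OF assms(1) ne l assms(2,3)]
        integrable_bounded_linear[OF bounded_linear_vec_nth assms(4)] by blast
    have iXv: "integrable ?X (\<lambda>x. x)"
    proof -
      have "(\<integral>\<^sup>+x. ennreal (norm x) \<partial>?X) = (\<Sum>q\<in>P. ennreal (l q) * (\<integral>\<^sup>+x. ennreal (norm x) \<partial>Z q))"
        by (rule mf(2)) measurable
      also have "\<dots> < \<infinity>"
        using assms(4) assms(1) unfolding integrable_iff_bounded by (auto simp: ennreal_mult_less_top)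
      finally have "(\<integral>\<^sup>+x. ennreal (norm x) \<partial>?X) < \<infinity>" .
      moreover have "(\<lambda>x. x) \<in> borel_measurable ?X"
        by (subst measurable_cong_sets[OF mf(1) refl]) (auto intro: measurable_ident_sets)
      ultimately show ?thesis unfolding integrable_iff_bounded by simp
    qed
    have comp: "expval ?X $ i = (\<Sum>q\<in>P. l q *\<^sub>R expval (Z q)) $ i" for i
    proof -
      have "expval ?X $ i = integral\<^sup>L ?X (\<lambda>x. x$i)"
        unfolding expval_def by (rule integral_bounded_linear[OF bounded_linear_vec_nth iXv, symmetric])
      also have "\<dots> = (\<Sum>q\<in>P. l q * integral\<^sup>L (Z q) (\<lambda>x. x$i))" using iX by blast
      also have "\<dots> = (\<Sum>q\<in>P. l q * expval (Z q) $ i)"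
        by (intro sum.cong refl) (simp add: expval_def integral_bounded_linear[OF bounded_linear_vec_nth assms(4)])
      finally show ?thesis by simp
    qed
    have fsd: "fsd_ge ?X (Z p)" and mj: "\<exists>j. marg_fsd_gt ?X (Z p) j" using dd by (auto simp: dist_dom_def)
    note dX = marg_dist[OF Xps Xsb iXv]
    note dP = marg_dist[OF assms(2)[OF p] assms(3)[OF p] assms(4)[OF p]]
    have cle: "cdf (distr ?X borel (\<lambda>x. x$i)) t \<le> cdf (distr (Z p) borel (\<lambda>x. x$i)) t" for i t
      unfolding dX(4) dP(4) by (rule marg_le[OF Xps Xsb assms(2)[OF p] assms(3)[OF p] fsd])
    have ge: "expval (Z p) $ i \<le> expval ?X $ i" for i
      using fsd_expect(1)[OF dX(1) dP(1) dX(2) dP(2) cle] unfolding dX(3) dP(3) .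
    obtain j where j: "marg_fsd_gt ?X (Z p) j" using mj by blast
    have gt: "expval (Z p) $ j < expval ?X $ j"
    proof -
      have "\<exists>t. cdf (distr ?X borel (\<lambda>x. x$j)) t < cdf (distr (Z p) borel (\<lambda>x. x$j)) t"
        using j unfolding dX(4) dP(4) marg_fsd_gt_def by blast
      from fsd_expect(2)[OF dX(1) dP(1) dX(2) dP(2) cle this] show ?thesis unfolding dX(3) dP(3) .
    qed
    have "pareto_dom (\<Sum>q\<in>P. l q *\<^sub>R expval (Z q)) (expval (Z p))"
      unfolding pareto_dom_def using ge gt comp by metis
    then show False using pCH l by (auto simp: CH_def)
  qed
qed

end
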